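(* Let $(\mathcal S,\mathcal A,P,R,d_0)$ be a finite episodic MDP with horizon $T$ and let $\pi_\theta$ be a policy differentiable in $\theta\in\mathbb R^n$, as described in the context. Then for every $\gamma\in[0,1]$, $$\nabla J(\theta)=\sum_{s\in\mathcal S} d^{\pi_\theta}_\gamma(s)\,\frac{\partial}{\partial\theta}V^{\pi_\theta}_\gamma(s)+\sum_{s\in\mathcal S}V^{\pi_\theta}_\gamma(s)\,\frac{\partial}{\partial\theta}d^{\pi_\theta}_\gamma(s).$$
   Context: Setting: $\mathcal S$ is a finite set of states, $\mathcal A$ a finite set of actions, $P(s'\mid s,a)$ a transition function, $R(\cdot\mid s,a,s')$ a reward distribution supported in $[-R_{\max},R_{\max}]$, and $d_0$ an initial state distribution. There is a special terminal absorbing state: once entered, the agent remains there and receives reward $0$. An episode runs as follows: $S_0\sim d_0$; at each time $t$, $A_t\sim\pi_\theta(\cdot\mid S_t)$, $S_{t+1}\sim P(\cdot\mid S_t,A_t)$, $R_t\sim R(\cdot\mid S_t,A_t,S_{t+1})$. The horizon $T$ is fixed and $S_T$ is the terminal absorbing state. The policy probabilities $\pi_\theta(a\mid s)$ are differentiable in $\theta\in\mathbb R^n$. All probabilities and expectations are under $\pi=\pi_\theta$. The objective is $J(\theta)=\mathbb E\big[\sum_{t=0}^{T-1}R_t\big]$. For $\gamma\in[0,1]$ (with $0^0=1$), $V^{\pi_\theta}_\gamma(s)=\mathbb E\big[\sum_{i=t}^{T}\gamma^{i-t}R_i\,\big|\,S_t=s\big]$, treated as a function of $s$ alone (the conditional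 expectation is assumed not to depend on $t$, e.g. because time is encoded in the state), with value $0$ at the terminal state. Define $d^{\pi_\theta}_\gamma(s)=d_0(s)+(1-\gamma)\sum_{t=1}^{T-1}\Pr(S_t=s)$. *)

theory Defs
  imports "HOL-Analysis.Analysis" "HOL-Probability.Probability"
begin

text \<open>Finite episodic MDP with a fixed policy (pol = \<pi>_\<theta> for a fixed \<theta>).
  Trajectories up to time t: states ss 0 .. ss t, actions as 0 .. as (t-1).\<close>

definition traj_prob :: "('s \<Rightarrow> real) \<Rightarrow> ('s \<Rightarrow> 'a \<Rightarrow> 's \<Rightarrow> real) \<Rightarrow> ('s \<Rightarrow> 'a \<Rightarrow> real)
    \<Rightarrow> nat \<Rightarrow> (nat \<Rightarrow> 's) \<Rightarrow> (nat \<Rightarrow> 'a) \<Rightarrow> real" where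
  "traj_prob d0 P pol t ss as =
     d0 (ss 0) * (\<Prod>i<t. pol (ss i) (as i) * P (ss i) (as i) (ss (Suc i)))"

definition traj_expect :: "('s \<Rightarrow> real) \<Rightarrow> ('s \<Rightarrow> 'a \<Rightarrow> 's \<Rightarrow> real) \<Rightarrow> ('s \<Rightarrow> 'a \<Rightarrow> real)
    \<Rightarrow> nat \<Rightarrow> ((nat \<Rightarrow> 's) \<Rightarrow> (nat \<Rightarrow> 'a) \<Rightarrow> real) \<Rightarrow> real" where
  "traj_expect d0 P pol t g =
     (\<Sum>ss\<in>PiE {..t} (\<lambda>_. UNIV). \<Sum>as\<in>PiE {..<t} (\<lambda>_. UNIV). traj_prob d0 P pol t ss as * g ss as)"

definition mean_reward :: "('s \<Rightarrow> 'a \<Rightarrow> 's \<Rightarrow> real pmf) \<Rightarrow> 's \<Rightarrow> 'a \<Rightarrow> 's \<Rightarrow> real" where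
  "mean_reward R s a s' = measure_pmf.expectation (R s a s') (\<lambda>r. r)"

definition state_prob :: "('s \<Rightarrow> real) \<Rightarrow> ('s \<Rightarrow> 'a \<Rightarrow> 's \<Rightarrow> real) \<Rightarrow> ('s \<Rightarrow> 'a \<Rightarrow> real)
    \<Rightarrow> nat \<Rightarrow> 's \<Rightarrow> real" where
  "state_prob d0 P pol t s = traj_expect d0 P pol t (\<lambda>ss as. if ss t = s then 1 else 0)"

text \<open>J = E[sum_{t<T} R_t]; E[R_t] needs the trajectory up to time t+1.\<close>
definition objective :: "('s \<Rightarrow> real) \<Rightarrow> ('s \<Rightarrow> 'a \<Rightarrow> 's \<Rightarrow> real) \<Rightarrow> ('s \<Rightarrow> 'a \<Rightarrow> 's \<Rightarrow> real pmf)
    \<Rightarrow> ('s \<Rightarrow> 'a \<Rightarrow> real) \<Rightarrow> nat \<Rightarrow> real" where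
  "objective d0 P R pol T =
     (\<Sum>t<T. traj_expect d0 P pol (Suc t) (\<lambda>ss as. mean_reward R (ss t) (as t) (ss (Suc t))))"

definition cond_return :: "('s \<Rightarrow> real) \<Rightarrow> ('s \<Rightarrow> 'a \<Rightarrow> 's \<Rightarrow> real) \<Rightarrow> ('s \<Rightarrow> 'a \<Rightarrow> 's \<Rightarrow> real pmf)
    \<Rightarrow> ('s \<Rightarrow> 'a \<Rightarrow> real) \<Rightarrow> nat \<Rightarrow> real \<Rightarrow> nat \<Rightarrow> 's \<Rightarrow> real" where
  "cond_return d0 P R pol T \<gamma> t s =
     traj_expect d0 P pol (Suc T)
       (\<lambda>ss as. (if ss t = s then 1 else 0) *
          (\<Sum>i=t..T. \<gamma> ^ (i - t) * mean_reward R (ss i) (as i) (ss (Suc i))))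
     / state_prob d0 P pol t s"

definition disc_visit :: "('s \<Rightarrow> real) \<Rightarrow> ('s \<Rightarrow> 'a \<Rightarrow> 's \<Rightarrow> real) \<Rightarrow> ('s \<Rightarrow> 'a \<Rightarrow> real)
    \<Rightarrow> nat \<Rightarrow> real \<Rightarrow> 's \<Rightarrow> real" where
  "disc_visit d0 P pol T \<gamma> s = d0 s + (1 - \<gamma>) * (\<Sum>t\<in>{1..<T}. state_prob d0 P pol t s)"

end

theory Submission imports Defs begin
lemma sum_PiE_insert:
  fixes F :: "(nat \<Rightarrow> 'b::finite) \<Rightarrow> real"
  assumes "x \<notin> S"
  shows "(\<Sum>f\<in>PiE (insert x S) (\<lambda>_. UNIV). F f) = (\<Sum>f\<in>PiE S (\<lambda>_. UNIV). \<Sum>y\<in>UNIV. F (f(x:=y)))"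
proof -
  have "(\<Sum>f\<in>PiE (insert x S) (\<lambda>_. UNIV). F f) = (\<Sum>p\<in>(UNIV \<times> PiE S (\<lambda>_. UNIV)). F ((\<lambda>(y, g). g(x := y)) p))"
    unfolding PiE_insert_eq
    by (subst sum.reindex) (use inj_combinator[OF assms, of "\<lambda>_. UNIV"] in auto)
  also have "\<dots> = (\<Sum>y\<in>UNIV. \<Sum>f\<in>PiE S (\<lambda>_. UNIV). F (f(x:=y)))"
    by (simp add: sum.cartesian_product prod.case_distrib)
  also have "\<dots> = (\<Sum>f\<in>PiE S (\<lambda>_. UNIV). \<Sum>y\<in>UNIV. F (f(x:=y)))"
    by (rule sum.swap)
  finally show ?thesis .
qed

lemma traj_prob_Suc:
  "traj_prob d0 P pol (Suc t) ss as = traj_prob d0 P pol t ss as * (pol (ss t) (as t) * P (ss t) (as t) (ss (Suc t)))"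
  unfolding traj_prob_def by (simp add: mult.assoc)

lemma traj_prob_upd:
  "traj_prob d0 P pol t (ss(Suc t := y)) (as(t := a)) = traj_prob d0 P pol t ss as"
  unfolding traj_prob_def by (intro arg_cong2[where f="(*)"] prod.cong) auto

lemma traj_prob_nonneg:
  assumes "\<forall>s. d0 s \<ge> 0" "\<forall>s a s'. P s a s' \<ge> 0" "\<forall>s a. pol s a \<ge> 0"
  shows "traj_prob d0 P pol t ss as \<ge> 0"
  unfolding traj_prob_def using assms by (intro mult_nonneg_nonneg prod_nonneg) auto

definition loc :: "nat \<Rightarrow> ((nat \<Rightarrow> 's) \<Rightarrow> (nat \<Rightarrow> 'a) \<Rightarrow> real) \<Rightarrow> bool" where
  "loc t g \<longleftrightarrow> (\<forall>ss as j y. t < j \<longrightarrow> g (ss(j:=y)) as = g ss as) \<and>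
               (\<forall>ss as j a. t \<le> j \<longrightarrow> g ss (as(j:=a)) = g ss as)"

lemma loc_Suc: "loc t g \<Longrightarrow> loc (Suc t) g"
  unfolding loc_def by auto

lemma loc_mono: assumes "loc t g" "t \<le> m" shows "loc m g"
  using assms(2) by (induction m rule: dec_induct) (use assms(1) in \<open>auto intro: loc_Suc\<close>)

lemma marg_Suc:
  fixes d0 :: "'s::finite \<Rightarrow> real" and P :: "'s \<Rightarrow> 'a::finite \<Rightarrow> 's \<Rightarrow> real"
  assumes P_sum: "\<forall>s a. (\<Sum>s'\<in>UNIV. P s a s') = 1" and pol_sum: "\<forall>s. (\<Sum>a\<in>UNIV. pol s a) = 1"
    and lg: "loc t g"
  shows "traj_expect d0 P pol (Suc t) g = traj_expect d0 P pol t g"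
proof -
  have g: "g (ss(Suc t := y)) (as(t := a)) = g ss as" for ss as y a
    using lg unfolding loc_def by (metis le_refl lessI)
  have "traj_expect d0 P pol (Suc t) g =
    (\<Sum>ss\<in>PiE {..t} (\<lambda>_. UNIV). \<Sum>y\<in>UNIV. \<Sum>as\<in>PiE {..<t} (\<lambda>_. UNIV). \<Sum>a\<in>UNIV.
       traj_prob d0 P pol (Suc t) (ss(Suc t := y)) (as(t:=a)) * g (ss(Suc t := y)) (as(t:=a)))"
    unfolding traj_expect_def atMost_Suc lessThan_Suc
    by (simp add: sum_PiE_insert)
  also have "\<dots> = (\<Sum>ss\<in>PiE {..t} (\<lambda>_. UNIV). \<Sum>y\<in>UNIV. \<Sum>as\<in>PiE {..<t} (\<lambda>_. UNIV). \<Sum>a\<in>UNIV.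
       (traj_prob d0 P pol t ss as * g ss as) * (pol (ss t) a * P (ss t) a y))"
    by (simp add: traj_prob_Suc traj_prob_upd g mult_ac)
  also have "\<dots> = (\<Sum>ss\<in>PiE {..t} (\<lambda>_. UNIV). \<Sum>as\<in>PiE {..<t} (\<lambda>_. UNIV).
       (traj_prob d0 P pol t ss as * g ss as) * (\<Sum>a\<in>UNIV. pol (ss t) a * (\<Sum>y\<in>UNIV. P (ss t) a y)))"
    apply (rule sum.cong, simp)
    apply (rule trans[OF sum.swap])
    apply (rule sum.cong, simp)
    apply (rule trans[OF sum.swap])
    apply (simp add: sum_distrib_left mult_ac)
    done
  also have "\<dots> = traj_expect d0 P pol t g"
    unfolding traj_expect_def using P_sum pol_sum by simp
  finally show ?thesis .
qed

lemma marg: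
  fixes d0 :: "'s::finite \<Rightarrow> real" and P :: "'s \<Rightarrow> 'a::finite \<Rightarrow> 's \<Rightarrow> real"
  assumes P_sum: "\<forall>s a. (\<Sum>s'\<in>UNIV. P s a s') = 1" and pol_sum: "\<forall>s. (\<Sum>a\<in>UNIV. pol s a) = 1"
    and lg: "loc t g" and tm: "t \<le> m"
  shows "traj_expect d0 P pol m g = traj_expect d0 P pol t g"
  using tm
proof (induction m rule: dec_induct)
  case (step m)
  then show ?case using marg_Suc[OF P_sum pol_sum loc_mono[OF lg step(1)]] by simp
qed simp

lemma E0:
  fixes d0 :: "'s::finite \<Rightarrow> real" and P :: "'s \<Rightarrow> 'a::finite \<Rightarrow> 's \<Rightarrow> real"
  shows "traj_expect d0 P pol 0 g = (\<Sum>y\<in>UNIV. d0 y * g ((\<lambda>_. undefined)(0:=y)) (\<lambda>_. undefined))"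
  unfolding traj_expect_def traj_prob_def
  by (simp add: atMost_0 sum_PiE_insert[where S="{}", simplified])

lemma E_add: "traj_expect d0 P pol m (\<lambda>ss as. f ss as + g ss as) = traj_expect d0 P pol m f + traj_expect d0 P pol m g"
  unfolding traj_expect_def by (simp add: distrib_left sum.distrib)

lemma E_diff: "traj_expect d0 P pol m (\<lambda>ss as. f ss as - g ss as) = traj_expect d0 P pol m f - traj_expect d0 P pol m g"
  unfolding traj_expect_def by (simp add: right_diff_distrib sum_subtractf)

lemma E_cmult: "traj_expect d0 P pol m (\<lambda>ss as. c * f ss as) = c * traj_expect d0 P pol m f"
  unfolding traj_expect_def by (simp add: sum_distrib_left mult_ac)

lemma E_sum: "traj_expect d0 P pol m (\<lambda>ss as. \<Sum>k\<in>K. f k ss as) = (\<Sum>k\<in>K. traj_expect d0 P pol m (f k))"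
proof -
  have "traj_expect d0 P pol m (\<lambda>ss as. \<Sum>k\<in>K. f k ss as) =
    (\<Sum>ss\<in>PiE {..m} (\<lambda>_. UNIV). \<Sum>as\<in>PiE {..<m} (\<lambda>_. UNIV). \<Sum>k\<in>K. traj_prob d0 P pol m ss as * f k ss as)"
    unfolding traj_expect_def by (simp only: sum_distrib_left)
  also have "\<dots> = (\<Sum>ss\<in>PiE {..m} (\<lambda>_. UNIV). \<Sum>k\<in>K. \<Sum>as\<in>PiE {..<m} (\<lambda>_. UNIV). traj_prob d0 P pol m ss as * f k ss as)"
    by (rule sum.cong[OF refl], rule sum.swap)
  also have "\<dots> = (\<Sum>k\<in>K. traj_expect d0 P pol m (f k))"
    unfolding traj_expect_def by (rule sum.swap)
  finally show ?thesis .
qed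

lemma E_nonneg:
  assumes "\<forall>s. d0 s \<ge> 0" "\<forall>s a s'. P s a s' \<ge> 0" "\<forall>s a. pol s a \<ge> 0" "\<forall>ss as. f ss as \<ge> 0"
  shows "traj_expect d0 P pol m f \<ge> 0"
  unfolding traj_expect_def using traj_prob_nonneg[OF assms(1-3)] assms(4)
  by (intro sum_nonneg mult_nonneg_nonneg) auto

lemma E_zero_mult:
  fixes d0 :: "'s::finite \<Rightarrow> real" and P :: "'s \<Rightarrow> 'a::finite \<Rightarrow> 's \<Rightarrow> real"
  assumes "\<forall>s. d0 s \<ge> 0" "\<forall>s a s'. P s a s' \<ge> 0" "\<forall>s a. pol s a \<ge> 0" "\<forall>ss as. f ss as \<ge> 0"
    and z: "traj_expect d0 P pol m f = 0"
  shows "traj_expect d0 P pol m (\<lambda>ss as. f ss as * h ss as) = 0"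
proof -
  let ?A = "PiE {..m} (\<lambda>_. UNIV :: 's set)" and ?B = "PiE {..<m} (\<lambda>_. UNIV :: 'a set)"
  have nn: "traj_prob d0 P pol m ss as * f ss as \<ge> 0" for ss as
    using traj_prob_nonneg[OF assms(1-3)] assms(4) by (intro mult_nonneg_nonneg) auto
  have "\<forall>ss\<in>?A. (\<Sum>as\<in>?B. traj_prob d0 P pol m ss as * f ss as) = 0"
    using z unfolding traj_expect_def
    by (subst (asm) sum_nonneg_eq_0_iff) (auto intro: sum_nonneg nn simp: finite_PiE)
  then have "\<forall>ss\<in>?A. \<forall>as\<in>?B. traj_prob d0 P pol m ss as * f ss as = 0"
    by (subst (asm) sum_nonneg_eq_0_iff) (auto intro: nn simp: finite_PiE)
  then show ?thesis unfolding traj_expect_def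
    by (intro sum.neutral ballI) (metis mult.assoc mult_zero_left)
qed

lemma telescope:
  fixes \<rho> :: "nat \<Rightarrow> real" and \<gamma> :: real
  assumes rT: "\<rho> T = 0"
  shows "(\<Sum>i=0..T. \<gamma>^(i-0) * \<rho> i) + (1-\<gamma>) * (\<Sum>t\<in>{1..<T}. \<Sum>i=t..T. \<gamma>^(i-t) * \<rho> i) = (\<Sum>t<T. \<rho> t)"
proof -
  define H where "H t = (\<Sum>i=t..T. \<gamma>^(i-t) * \<rho> i)" for t
  have rec: "H t = \<rho> t + \<gamma> * H (Suc t)" if "t < T" for t
  proof -
    have "H t = \<gamma>^(t-t) * \<rho> t + (\<Sum>i=Suc t..T. \<gamma>^(i-t) * \<rho> i)"
      unfolding H_def using that by (subst sum.atLeast_Suc_atMost) auto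
    also have "(\<Sum>i=Suc t..T. \<gamma>^(i-t) * \<rho> i) = (\<Sum>i=Suc t..T. \<gamma> * (\<gamma>^(i-Suc t) * \<rho> i))"
      by (rule sum.cong) (auto simp: Suc_diff_Suc[symmetric] simp del: Suc_diff_Suc)
    finally show ?thesis unfolding H_def by (simp add: sum_distrib_left)
  qed
  have gen: "(\<Sum>t<Suc k. \<rho> t) = H 0 + (1-\<gamma>)*(\<Sum>t\<in>{1..<Suc k}. H t) - \<gamma> * H (Suc k)" if "Suc k \<le> T" for k
    using that
  proof (induction k)
    case 0
    then show ?case using rec[of 0] by simp
  next
    case (Suc k)
    have "(\<Sum>t<Suc (Suc k). \<rho> t) = (\<Sum>t<Suc k. \<rho> t) + \<rho> (Suc k)" by simp
    also have "\<dots> = H 0 + (1-\<gamma>)*(\<Sum>t\<in>{1..<Suc k}. H t) - \<gamma> * H (Suc k) + (H (Suc k) - \<gamma> * H (Suc (Suc k)))"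
      using Suc.IH Suc.prems rec[of "Suc k"] by simp
    also have "\<dots> = H 0 + (1-\<gamma>)*(\<Sum>t\<in>{1..<Suc (Suc k)}. H t) - \<gamma> * H (Suc (Suc k))"
      by (simp add: algebra_simps)
    finally show ?case .
  qed
  have HT: "H T = 0" unfolding H_def using rT by simp
  show ?thesis
  proof (cases T)
    case 0
    then show ?thesis using rT by simp
  next
    case (Suc k)
    then show ?thesis using gen[of k] HT unfolding H_def by simp
  qed
qed

lemma value_identity:
  fixes d0 :: "'s::finite \<Rightarrow> real"
    and P :: "'s \<Rightarrow> 'a::finite \<Rightarrow> 's \<Rightarrow> real"
    and R :: "'s \<Rightarrow> 'a \<Rightarrow> 's \<Rightarrow> real pmf"
    and pol :: "'s \<Rightarrow> 'a \<Rightarrow> real" and V :: "'s \<Rightarrow> real" and tm :: 's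
  assumes d0_nonneg: "\<forall>s. d0 s \<ge> 0" and d0_sum: "(\<Sum>s\<in>UNIV. d0 s) = 1"
    and P_nonneg: "\<forall>s a s'. P s a s' \<ge> 0" and P_sum: "\<forall>s a. (\<Sum>s'\<in>UNIV. P s a s') = 1"
    and tm_reward: "\<forall>a s'. R tm a s' = return_pmf 0"
    and pol_nonneg: "\<forall>s a. pol s a \<ge> 0"
    and pol_sum: "\<forall>s. (\<Sum>a\<in>UNIV. pol s a) = 1"
    and horizon: "state_prob d0 P pol T tm = 1"
    and V_cond: "\<forall>t s. t \<le> T \<longrightarrow> state_prob d0 P pol t s > 0 \<longrightarrow>
                   V s = cond_return d0 P R pol T \<gamma> t s"
  shows "objective d0 P R pol T = (\<Sum>s\<in>UNIV. disc_visit d0 P pol T \<gamma> s * V s)"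
proof -
  note nn = d0_nonneg P_nonneg pol_nonneg
  define E where "E = traj_expect d0 P pol"
  define r where "r i = (\<lambda>(ss::nat\<Rightarrow>'s) (as::nat\<Rightarrow>'a). mean_reward R (ss i) (as i) (ss (Suc i)))" for i
  define \<rho> where "\<rho> i = E (Suc T) (r i)" for i
  define sp where "sp = state_prob d0 P pol"
  have sp_E: "sp t s = E t (\<lambda>ss as. if ss t = s then 1 else 0)" for t s
    unfolding sp_def E_def state_prob_def ..
  have loc_r: "loc (Suc i) (r i)" for i unfolding loc_def r_def by auto
  have loc_ind: "loc t (\<lambda>ss (as::nat\<Rightarrow>'a). if ss t = s then (1::real) else 0)" for t s
    unfolding loc_def by auto
  have margE: "E m g = E t g" if "loc t g" "t \<le> m" for m t g
    unfolding E_def using marg[OF P_sum pol_sum that] .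
  have obj: "objective d0 P R pol T = (\<Sum>i<T. \<rho> i)"
    unfolding objective_def \<rho>_def
    by (rule sum.cong) (auto simp: r_def[symmetric] E_def[symmetric] intro: margE[OF loc_r, symmetric])
  have E1: "E T (\<lambda>_ _. 1) = 1"
  proof -
    have "E T (\<lambda>_ _. 1) = E 0 (\<lambda>_ _. 1)" by (rule margE) (auto simp: loc_def)
    also have "\<dots> = 1" unfolding E_def E0 using d0_sum by simp
    finally show ?thesis .
  qed
  have sp0: "sp 0 s = d0 s" for s
    unfolding sp_E E_def E0 by (simp add: if_distrib cong: if_cong)
  have \<rho>T: "\<rho> T = 0"
  proof -
    have "E T (\<lambda>ss as. 1 - (if ss T = tm then 1 else 0)) = 0"
      unfolding E_def E_diff using E1 horizon sp_E[of T tm] unfolding E_def sp_def by simp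
    then have "E (Suc T) (\<lambda>ss as. 1 - (if ss T = tm then 1 else 0)) = 0"
      by (subst margE[of T]) (auto simp: loc_def)
    then have "E (Suc T) (\<lambda>ss as. (1 - (if ss T = tm then 1 else 0)) * r T ss as) = 0"
      unfolding E_def by (intro E_zero_mult[OF nn]) auto
    moreover have "(\<lambda>ss as. (1 - (if ss T = tm then 1 else 0)) * r T ss as) = r T"
      by (intro ext) (auto simp: r_def mean_reward_def tm_reward)
    ultimately show ?thesis unfolding \<rho>_def by simp
  qed
  define G where "G t = (\<lambda>ss as. \<Sum>i=t..T. \<gamma>^(i-t) * r i ss as)" for t
  have N: "sp t s * V s = E (Suc T) (\<lambda>ss as. (if ss t = s then 1 else 0) * G t ss as)" if "t \<le> T" for t s
  proof (cases "sp t s > 0")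
    case True
    then show ?thesis using V_cond that
      unfolding cond_return_def sp_def E_def G_def r_def by auto
  next
    case False
    have "sp t s \<ge> 0" unfolding sp_E E_def by (rule E_nonneg[OF nn]) auto
    with False have z: "sp t s = 0" by simp
    have "E (Suc T) (\<lambda>ss as. if ss t = s then 1 else 0) = 0"
      using z unfolding sp_E by (subst margE[OF loc_ind]) (use that in auto)
    then have "E (Suc T) (\<lambda>ss as. (if ss t = s then 1 else 0) * G t ss as) = 0"
      unfolding E_def by (intro E_zero_mult[OF nn]) auto
    then show ?thesis using z by simp
  qed
  have sumN: "(\<Sum>s\<in>UNIV. sp t s * V s) = (\<Sum>i=t..T. \<gamma>^(i-t) * \<rho> i)" if "t \<le> T" for t
  proof -
    have "(\<Sum>s\<in>UNIV. sp t s * V s) = (\<Sum>s\<in>UNIV. E (Suc T) (\<lambda>ss as. (if ss t = s then 1 else 0) * G t ss as))"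
      using N[OF that] by simp
    also have "\<dots> = E (Suc T) (\<lambda>ss as. \<Sum>s\<in>UNIV. (if ss t = s then 1 else 0) * G t ss as)"
      unfolding E_def by (rule E_sum[symmetric])
    also have "\<dots> = E (Suc T) (G t)"
    proof -
      have "(\<lambda>ss as. \<Sum>s\<in>UNIV. (if ss t = s then 1 else 0) * G t ss as) = G t"
      proof (intro ext)
        fix ss as
        have "(\<Sum>s\<in>UNIV. (if ss t = s then 1 else 0) * G t ss as) = (\<Sum>s\<in>UNIV. if ss t = s then G t ss as else 0)"
          by (rule sum.cong) auto
        also have "\<dots> = G t ss as" by (simp add: sum.delta')
        finally show "(\<Sum>s\<in>UNIV. (if ss t = s then 1 else 0) * G t ss as) = G t ss as" .
      qed
      then show ?thesis by simp
    qed
    also have "\<dots> = (\<Sum>i=t..T. \<gamma>^(i-t) * \<rho> i)"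
      unfolding G_def E_def \<rho>_def by (simp add: E_sum E_cmult)
    finally show ?thesis .
  qed
  have "(\<Sum>s\<in>UNIV. disc_visit d0 P pol T \<gamma> s * V s)
      = (\<Sum>s\<in>UNIV. sp 0 s * V s) + (1-\<gamma>) * (\<Sum>t\<in>{1..<T}. \<Sum>s\<in>UNIV. sp t s * V s)"
  proof -
    have "(\<Sum>s\<in>UNIV. disc_visit d0 P pol T \<gamma> s * V s)
      = (\<Sum>s\<in>UNIV. d0 s * V s) + (\<Sum>s\<in>UNIV. (1-\<gamma>) * (\<Sum>t\<in>{1..<T}. sp t s * V s))"
      unfolding disc_visit_def sp_def
      by (simp only: distrib_right sum.distrib sum_distrib_right mult.assoc)
    also have "(\<Sum>s\<in>UNIV. (1-\<gamma>) * (\<Sum>t\<in>{1..<T}. sp t s * V s)) = (1-\<gamma>) * (\<Sum>s\<in>UNIV. \<Sum>t\<in>{1..<T}. sp t s * V s)"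
      by (simp only: sum_distrib_left)
    also have "(\<Sum>s\<in>UNIV. \<Sum>t\<in>{1..<T}. sp t s * V s) = (\<Sum>t\<in>{1..<T}. \<Sum>s\<in>UNIV. sp t s * V s)"
      by (rule sum.swap)
    finally show ?thesis by (simp only: sp0)
  qed
  also have "\<dots> = (\<Sum>i=0..T. \<gamma>^(i-0) * \<rho> i) + (1-\<gamma>) * (\<Sum>t\<in>{1..<T}. \<Sum>i=t..T. \<gamma>^(i-t) * \<rho> i)"
    using sumN by (simp del: diff_zero)
  also have "\<dots> = (\<Sum>t<T. \<rho> t)" by (rule telescope[where \<rho>=\<rho> and T=T, OF \<rho>T])
  finally show ?thesis using obj by simp
qed

lemma differentiable_prod':
  fixes f :: "'i \<Rightarrow> 'x::real_normed_vector \<Rightarrow> real"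
  assumes "finite I" "\<forall>i\<in>I. f i differentiable (at x)"
  shows "(\<lambda>x. \<Prod>i\<in>I. f i x) differentiable (at x)"
  using assms by (induction I rule: finite_induct) auto

theorem corollary1:
  fixes d0 :: "'s::finite \<Rightarrow> real"
    and P :: "'s \<Rightarrow> 'a::finite \<Rightarrow> 's \<Rightarrow> real"
    and R :: "'s \<Rightarrow> 'a \<Rightarrow> 's \<Rightarrow> real pmf"
    and Rmax :: real and tm :: 's and T :: nat
    and \<pi> :: "real^'n \<Rightarrow> 's \<Rightarrow> 'a \<Rightarrow> real"
    and V :: "real^'n \<Rightarrow> 's \<Rightarrow> real"
    and \<gamma> :: real and \<theta> :: "real^'n"
  assumes d0_nonneg: "\<forall>s. d0 s \<ge> 0" and d0_sum: "(\<Sum>s\<in>UNIV. d0 s) = 1"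
    and P_nonneg: "\<forall>s a s'. P s a s' \<ge> 0" and P_sum: "\<forall>s a. (\<Sum>s'\<in>UNIV. P s a s') = 1"
    and R_bounded: "\<forall>s a s'. set_pmf (R s a s') \<subseteq> {-Rmax..Rmax}"
    and tm_absorbing: "\<forall>a. P tm a tm = 1"
    and tm_reward: "\<forall>a s'. R tm a s' = return_pmf 0"
    and pol_nonneg: "\<forall>x s a. \<pi> x s a \<ge> 0"
    and pol_sum: "\<forall>x s. (\<Sum>a\<in>UNIV. \<pi> x s a) = 1"
    and pol_diff: "\<forall>s a x. (\<lambda>y. \<pi> y s a) differentiable (at x)"
    and horizon: "\<forall>x. state_prob d0 P (\<pi> x) T tm = 1"
    and gamma: "0 \<le> \<gamma>" "\<gamma> \<le> 1"
    and V_cond: "\<forall>x t s. t \<le> T \<longrightarrow> state_prob d0 P (\<pi> x) t s > 0 \<longrightarrow>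
                   V x s = cond_return d0 P R (\<pi> x) T \<gamma> t s"
    and V_tm: "\<forall>x. V x tm = 0"
    and V_diff: "\<forall>s. (\<lambda>x. V x s) differentiable (at \<theta>)"
  shows "(\<forall>s. (\<lambda>x. disc_visit d0 P (\<pi> x) T \<gamma> s) differentiable (at \<theta>)) \<and>
         ((\<lambda>x. objective d0 P R (\<pi> x) T) has_derivative
           (\<lambda>h. (\<Sum>s\<in>UNIV. disc_visit d0 P (\<pi> \<theta>) T \<gamma> s * frechet_derivative (\<lambda>x. V x s) (at \<theta>) h)
              + (\<Sum>s\<in>UNIV. V \<theta> s * frechet_derivative (\<lambda>x. disc_visit d0 P (\<pi> x) T \<gamma> s) (at \<theta>) h)))
          (at \<theta>)"
proof -
  have ident: "objective d0 P R (\<pi> x) T = (\<Sum>s\<in>UNIV. disc_visit d0 P (\<pi> x) T \<gamma> s * V x s)" for x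
    by (rule value_identity[where tm=tm]) (use assms in auto)
  have dv: "(\<lambda>x. disc_visit d0 P (\<pi> x) T \<gamma> s) differentiable (at y)" for s y
    unfolding disc_visit_def state_prob_def traj_expect_def traj_prob_def
    using pol_diff
    by (intro differentiable_add differentiable_mult differentiable_const differentiable_sum ballI
          finite_PiE differentiable_prod') auto
  have "((\<lambda>x. \<Sum>s\<in>UNIV. disc_visit d0 P (\<pi> x) T \<gamma> s * V x s) has_derivative
      (\<lambda>h. \<Sum>s\<in>UNIV. disc_visit d0 P (\<pi> \<theta>) T \<gamma> s * frechet_derivative (\<lambda>x. V x s) (at \<theta>) h
          + frechet_derivative (\<lambda>x. disc_visit d0 P (\<pi> x) T \<gamma> s) (at \<theta>) h * V \<theta> s)) (at \<theta>)"
    using dv V_diff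
    by (intro has_derivative_sum has_derivative_mult) (auto simp: frechet_derivative_works)
  then have "((\<lambda>x. objective d0 P R (\<pi> x) T) has_derivative
           (\<lambda>h. (\<Sum>s\<in>UNIV. disc_visit d0 P (\<pi> \<theta>) T \<gamma> s * frechet_derivative (\<lambda>x. V x s) (at \<theta>) h)
              + (\<Sum>s\<in>UNIV. V \<theta> s * frechet_derivative (\<lambda>x. disc_visit d0 P (\<pi> x) T \<gamma> s) (at \<theta>) h)))
          (at \<theta>)"
    unfolding ident by (simp add: sum.distrib mult.commute)
  then show ?thesis using dv by blast
qed

end
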